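(* Let $f,g:\mathbb{R}^n\to\mathbb{R}$ satisfy assumptions (A1)–(A4) below, let $\zeta\in[0,1)$ and let $x_0\in\Omega=\{x: g(x)\le 0\}$. Then the trajectory $x(t;\zeta,x_0)$ stays, for all $t$ in its maximal existence interval, within the set $B_{f(x_0)}=\{x: f(x)\le f(x_0)\}$.
   Context: Assumptions: (A1) $\lim_{|x|\to\infty} f(x)=+\infty$; (A2) $\nabla f(x)\neq 0$ for all $x\in\Omega=\{x:g(x)\le 0\}$; (A3) $\nabla g(x)\neq 0$ for all $x\in\Omega$; (A4) $f$ and $g$ are twice continuously differentiable. For $\zeta\in[0,1)$ define the vector field $\mathbf{s}_\zeta(x)=-\frac{\nabla f(x)}{|\nabla f(x)|}-\zeta\frac{\nabla g(x)}{|\nabla g(x)|}$ ($|\cdot|$ the Euclidean norm), defined on $E=\{x\in\mathbb{R}^n: \nabla f(x)\neq 0,\ \nabla g(x)\neq 0\}$. The trajectory $x(t;\zeta,x_0)$ is the solution of $\frac{dx}{dt}=\mathbf{s}_\zeta(x)$, $x(0)=x_0$, on its maximal interval of existence $[0,T_{\zeta,x_0})$ in $E$. *)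

theory Defs
  imports "HOL-Analysis.Analysis"
begin

definition C2_with_gradient :: "(real^'n \<Rightarrow> real) \<Rightarrow> (real^'n \<Rightarrow> real^'n) \<Rightarrow> bool" where
  "C2_with_gradient f Df \<longleftrightarrow>
     (\<forall>x. (f has_derivative (\<lambda>h. Df x \<bullet> h)) (at x)) \<and>
     (\<exists>D2f :: real^'n \<Rightarrow> ((real^'n) \<Rightarrow>\<^sub>L (real^'n)).
        (\<forall>x. (Df has_derivative blinfun_apply (D2f x)) (at x)) \<and> continuous_on UNIV D2f)"

definition s_field :: "(real^'n \<Rightarrow> real^'n) \<Rightarrow> (real^'n \<Rightarrow> real^'n) \<Rightarrow> real \<Rightarrow> real^'n \<Rightarrow> real^'n" where
  "s_field Df Dg \<zeta> x = - ((1 / norm (Df x)) *\<^sub>R Df x) - \<zeta> *\<^sub>R ((1 / norm (Dg x)) *\<^sub>R Dg x)"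

definition E_set :: "(real^'n \<Rightarrow> real^'n) \<Rightarrow> (real^'n \<Rightarrow> real^'n) \<Rightarrow> (real^'n) set" where
  "E_set Df Dg = {x. Df x \<noteq> 0 \<and> Dg x \<noteq> 0}"

definition is_solution :: "(real^'n \<Rightarrow> real^'n) \<Rightarrow> (real^'n) set \<Rightarrow> real^'n \<Rightarrow> (real \<Rightarrow> real^'n) \<Rightarrow> ereal \<Rightarrow> bool" where
  "is_solution V E x0 x T \<longleftrightarrow> T > 0 \<and> x 0 = x0 \<and>
     (\<forall>t. 0 \<le> t \<and> ereal t < T \<longrightarrow>
        x t \<in> E \<and> (x has_vector_derivative V (x t)) (at t within {s. 0 \<le> s \<and> ereal s < T}))"

definition maximal_solution :: "(real^'n \<Rightarrow> real^'n) \<Rightarrow> (real^'n) set \<Rightarrow> real^'n \<Rightarrow> (real \<Rightarrow> real^'n) \<Rightarrow> ereal \<Rightarrow> bool" where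
  "maximal_solution V E x0 x T \<longleftrightarrow> is_solution V E x0 x T \<and>
     (\<forall>y T'. is_solution V E x0 y T' \<longrightarrow> T' \<le> T)"

end

theory Submission
  imports Defs
begin

lemma inner_s_nonpos:
  fixes a b :: "real^'n"
  assumes "0 \<le> z" "z < 1"
  shows "a \<bullet> (- ((1 / norm a) *\<^sub>R a) - z *\<^sub>R ((1 / norm b) *\<^sub>R b)) \<le> 0"
proof -
  have e: "a \<bullet> (- ((1 / norm a) *\<^sub>R a) - z *\<^sub>R ((1 / norm b) *\<^sub>R b))
        = - (1 / norm a) * (a \<bullet> a) - z * (1 / norm b) * (a \<bullet> b)"
    by (simp add: inner_diff_right)
  have aa: "(1 / norm a) * (a \<bullet> a) = norm a"
    by (simp add: power2_norm_eq_inner[symmetric] power2_eq_square)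
  have ab: "\<bar>a \<bullet> b\<bar> \<le> norm a * norm b" by (rule Cauchy_Schwarz_ineq2)
  have "(1 / norm b) * \<bar>a \<bullet> b\<bar> \<le> norm a"
  proof (cases "norm b = 0")
    case False
    then have "norm b > 0" by simp
    then show ?thesis using ab by (simp add: field_simps)
  qed simp
  moreover have "\<bar>(1 / norm b) * (a \<bullet> b)\<bar> = (1 / norm b) * \<bar>a \<bullet> b\<bar>"
    by (simp add: abs_mult)
  ultimately have c: "- ((1 / norm b) * (a \<bullet> b)) \<le> norm a" by linarith
  have c2: "z * (- ((1 / norm b) * (a \<bullet> b))) \<le> z * norm a"
    using mult_left_mono[OF c assms(1)] .
  have c3: "z * norm a \<le> 1 * norm a"
    using mult_right_mono[of z 1 "norm a"] assms(2) by simp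
  have "- (z * (1 / norm b) * (a \<bullet> b)) = z * (- ((1 / norm b) * (a \<bullet> b)))" by simp
  then show ?thesis using e aa c2 c3 by linarith
qed

theorem lemma5p2:
  fixes f g :: "real^'n \<Rightarrow> real" and Df Dg :: "real^'n \<Rightarrow> real^'n"
    and \<zeta> :: real and x0 :: "real^'n" and x :: "real \<Rightarrow> real^'n" and T :: ereal
  assumes A1: "filterlim f at_top at_infinity"
    and A2: "\<forall>y. g y \<le> 0 \<longrightarrow> Df y \<noteq> 0"
    and A3: "\<forall>y. g y \<le> 0 \<longrightarrow> Dg y \<noteq> 0"
    and A4f: "C2_with_gradient f Df"
    and A4g: "C2_with_gradient g Dg"
    and zeta: "0 \<le> \<zeta>" "\<zeta> < 1"
    and x0: "g x0 \<le> 0"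
    and traj: "maximal_solution (s_field Df Dg \<zeta>) (E_set Df Dg) x0 x T"
  shows "\<forall>t. 0 \<le> t \<and> ereal t < T \<longrightarrow> f (x t) \<le> f x0"
proof (intro allI impI)
  fix t assume t: "0 \<le> t \<and> ereal t < T"
  have sol: "is_solution (s_field Df Dg \<zeta>) (E_set Df Dg) x0 x T"
    using traj by (simp add: maximal_solution_def)
  have x00: "x 0 = x0" using sol by (simp add: is_solution_def)
  have fd: "\<And>y. (f has_derivative (\<lambda>h. Df y \<bullet> h)) (at y)"
    using A4f by (simp add: C2_with_gradient_def)
  have sub: "{0..t} \<subseteq> {s. 0 \<le> s \<and> ereal s < T}"
    using t by auto (meson ereal_less_eq(3) order.strict_trans1)
  have D: "((\<lambda>s. f (x s)) has_derivative (\<lambda>h. Df (x s) \<bullet> (h *\<^sub>R s_field Df Dg \<zeta> (x s))))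
             (at s within {0..t})" if "0 \<le> s" "s \<le> t" for s
  proof -
    have "s \<in> {s. 0 \<le> s \<and> ereal s < T}" using that sub by auto
    then have "(x has_vector_derivative s_field Df Dg \<zeta> (x s)) (at s within {s. 0 \<le> s \<and> ereal s < T})"
      using sol by (simp add: is_solution_def)
    then have "(x has_vector_derivative s_field Df Dg \<zeta> (x s)) (at s within {0..t})"
      using sub by (rule has_vector_derivative_within_subset)
    then have "(x has_derivative (\<lambda>h. h *\<^sub>R s_field Df Dg \<zeta> (x s))) (at s within {0..t})"
      by (simp add: has_vector_derivative_def)
    then show ?thesis using fd by (rule has_derivative_compose)
  qed
  obtain s where s: "s \<in> {0..t}"
    and eq: "f (x t) - f (x 0) = Df (x s) \<bullet> ((t - 0) *\<^sub>R s_field Df Dg \<zeta> (x s))"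
    using mvt_very_simple[OF conjunct1[OF t] D] by blast
  have "Df (x s) \<bullet> s_field Df Dg \<zeta> (x s) \<le> 0"
    unfolding s_field_def using inner_s_nonpos[OF zeta] by blast
  then have "Df (x s) \<bullet> ((t - 0) *\<^sub>R s_field Df Dg \<zeta> (x s)) \<le> 0"
    using t by (simp add: mult_nonneg_nonpos)
  then show "f (x t) \<le> f x0" using eq x00 by simp
qed

end
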